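(* Let $T=(V,E)$ be a temporal bipartite graph, let $\tau>0$, let $i\in\{1,\dots,6\}$ and let $p\in(0,1)$. Let $\widehat{C}_i$ be the estimator produced by either \texttt{TBC-E} or \texttt{TBC-N} (both with sampling probability $p$), as described in the context. Then $\mathbb{E}[\widehat{C}_i]=C_i$ and $\operatorname{Var}[\widehat{C}_i]\le \frac{1-p}{p}\,C_i^2$.
   Context: A temporal bipartite graph $T=(V,E)$ has node set $V=U\cup L$ with $U\cap L=\emptyset$ and a finite (multi)set $E\subseteq U\times L\times\mathbb{R}^+$ of temporal edges $(u,l,t)$ (several edges may join the same pair $u,l$ at different times); $m=|E|$. A temporal butterfly $B_i$ ($i=1,\dots,6$) is the butterfly on nodes $u'_1,u'_2\in U$-side and $l'_1,l'_2\in L$-side with edges $(u'_1,l'_1),(u'_2,l'_1),(u'_1,l'_2),(u'_2,l'_2)$ together with an ordering $\sigma_i$ of these four edges; $\sigma_1,\dots,\sigma_6$ are the six orderings in which $(u'_1,l'_1)$ comes first (a fixed enumeration of the permutations of the remaining three edges). Given $\tau>0$, a set $S$ of four temporal edges $\{(u_x,l_x,t_1),(u_y,l_x,t_2),(u_x,l_y,t_3),(u_y,l_y,t_4)\}$ of $T$ with $u_x\ne u_y\in U$, $l_x\ne l_y\in L$ is a $\tau$-instance of $B_i$ if, under the map $u_x\mapsto u'_1,u_y\mapsto u'_2,l_x\mapsto l'_1,l_y\mapsto l'_2$, the order of the four edges by timestamp matches $\sigma_i$ (so $(u_x,l_x,t_1)$ has the smallest timestamp), and $\max_{j\in\{2,3,4\}}t_j-t_1\le\tau$.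 $C_i$ denotes the number of $\tau$-instances of $B_i$ in $T$, and for an edge $e\in E$, $C_i(e)$ denotes the number of $\tau$-instances of $B_i$ whose first (smallest-timestamp) edge is $e$, so that $\sum_{e\in E}C_i(e)=C_i$. Algorithm \texttt{TBC-E}: each edge $e\in E$ is put into a sample $\widehat{E}$ independently with probability $p$, and the output is $\widehat{C}_i=\sum_{e\in\widehat{E}}C_i(e)/p$. Algorithm \texttt{TBC-N}: each node $u\in U$ is put into a sample $\widehat{U}$ independently with probability $p$ (the same construction may alternatively be applied to $L$), $\widehat{E}$ is the set of all edges incident to a node of $\widehat{U}$, and the output is $\widehat{C}_i=\sum_{e\in\widehat{E}}C_i(e)/p$. *)

theory Defs
  imports "HOL-Probability.Probability"
begin

text \<open>A temporal bipartite graph: edges are identified by elements of a finite set E of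
edge identifiers (so parallel edges with equal (u,l,t) are allowed, i.e. E is a multiset);
eu e \<in> U, el e \<in> L and et e > 0 are the endpoints and timestamp of edge e.
Edge positions in a butterfly: 0 = (u1,l1), 1 = (u2,l1), 2 = (u1,l2), 3 = (u2,l2).\<close>

definition sigmas :: "nat list list" where
  "sigmas = [[0,1,2,3],[0,1,3,2],[0,2,1,3],[0,2,3,1],[0,3,1,2],[0,3,2,1]]"

definition sigma :: "nat \<Rightarrow> nat list" where
  "sigma i = sigmas ! (i - 1)"

fun is_inst :: "('e \<Rightarrow> 'u) \<Rightarrow> ('e \<Rightarrow> 'l) \<Rightarrow> ('e \<Rightarrow> real) \<Rightarrow> 'e set \<Rightarrow> real \<Rightarrow> nat
    \<Rightarrow> 'e \<times> 'e \<times> 'e \<times> 'e \<Rightarrow> bool" where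
  "is_inst eu el et E tau i (e1, e2, e3, e4) \<longleftrightarrow>
     e1 \<in> E \<and> e2 \<in> E \<and> e3 \<in> E \<and> e4 \<in> E \<and>
     eu e1 = eu e3 \<and> eu e2 = eu e4 \<and> el e1 = el e2 \<and> el e3 = el e4 \<and>
     eu e1 \<noteq> eu e2 \<and> el e1 \<noteq> el e3 \<and>
     sorted_wrt (<) (map (\<lambda>j. et ([e1, e2, e3, e4] ! j)) (sigma i)) \<and>
     (\<forall>e \<in> {e2, e3, e4}. et e - et e1 \<le> tau)"

definition count_C :: "('e \<Rightarrow> 'u) \<Rightarrow> ('e \<Rightarrow> 'l) \<Rightarrow> ('e \<Rightarrow> real) \<Rightarrow> 'e set \<Rightarrow> real \<Rightarrow> nat \<Rightarrow> nat" where
  "count_C eu el et E tau i = card {q. is_inst eu el et E tau i q}"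

definition count_Ce :: "('e \<Rightarrow> 'u) \<Rightarrow> ('e \<Rightarrow> 'l) \<Rightarrow> ('e \<Rightarrow> real) \<Rightarrow> 'e set \<Rightarrow> real \<Rightarrow> nat \<Rightarrow> 'e \<Rightarrow> nat" where
  "count_Ce eu el et E tau i e = card {q. is_inst eu el et E tau i q \<and> fst q = e}"

definition estimator :: "('e \<Rightarrow> 'u) \<Rightarrow> ('e \<Rightarrow> 'l) \<Rightarrow> ('e \<Rightarrow> real) \<Rightarrow> 'e set \<Rightarrow> real \<Rightarrow> nat \<Rightarrow> real
    \<Rightarrow> 'e set \<Rightarrow> real" where
  "estimator eu el et E tau i p Ehat = (\<Sum>e\<in>Ehat. real (count_Ce eu el et E tau i e)) / p"

definition sample_set :: "'a set \<Rightarrow> real \<Rightarrow> ('a \<Rightarrow> bool) pmf" where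
  "sample_set A p = Pi_pmf A False (\<lambda>_. bernoulli_pmf p)"

definition TBC_E :: "('e \<Rightarrow> 'u) \<Rightarrow> ('e \<Rightarrow> 'l) \<Rightarrow> ('e \<Rightarrow> real) \<Rightarrow> 'e set \<Rightarrow> real \<Rightarrow> nat \<Rightarrow> real
    \<Rightarrow> ('e \<Rightarrow> bool) \<Rightarrow> real" where
  "TBC_E eu el et E tau i p s = estimator eu el et E tau i p {e \<in> E. s e}"

text \<open>TBC-N: sampled nodes given by s over the node side; Ehat = edges incident to a sampled node
(node of edge e on the sampled side is side e).\<close>
definition TBC_N :: "('e \<Rightarrow> 'u) \<Rightarrow> ('e \<Rightarrow> 'l) \<Rightarrow> ('e \<Rightarrow> real) \<Rightarrow> 'e set \<Rightarrow> real \<Rightarrow> nat \<Rightarrow> real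
    \<Rightarrow> ('e \<Rightarrow> 'v) \<Rightarrow> ('v \<Rightarrow> bool) \<Rightarrow> real" where
  "TBC_N eu el et E tau i p side s = estimator eu el et E tau i p {e \<in> E. s (side e)}"

end

theory Submission
  imports Defs
begin


lemma E_sub:
  fixes f :: "'a \<Rightarrow> bool \<Rightarrow> real"
  assumes "finite A" "B \<subseteq> A" "\<And>x v. f x v \<ge> 0"
  shows "measure_pmf.expectation (Pi_pmf A d (\<lambda>_. bernoulli_pmf p)) (\<lambda>y. \<Prod>x\<in>B. f x (y x))
       = (\<Prod>x\<in>B. measure_pmf.expectation (bernoulli_pmf p) (f x))"
proof -
  define g where "g x = (if x \<in> B then f x else (\<lambda>_. 1::real))" for x
  have 1: "(\<lambda>y. \<Prod>x\<in>B. f x (y x)) = (\<lambda>y. \<Prod>x\<in>A. g x (y x))"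
    by (rule ext, rule prod.mono_neutral_cong_left) (use assms in \<open>auto simp: g_def finite_subset\<close>)
  have 2: "(\<Prod>x\<in>B. measure_pmf.expectation (bernoulli_pmf p) (f x))
       = (\<Prod>x\<in>A. measure_pmf.expectation (bernoulli_pmf p) (g x))"
    by (rule prod.mono_neutral_cong_left) (use assms in \<open>auto simp: g_def finite_subset\<close>)
  show ?thesis unfolding 1 2
    by (rule expectation_prod_Pi_pmf) (use assms in \<open>auto simp: g_def intro: integrable_measure_pmf_finite\<close>)
qed

definition ind :: "bool \<Rightarrow> real" where "ind v = (if v then 1 else 0)"

lemma fin_set:
  assumes "finite A"
  shows "finite (set_pmf (Pi_pmf A d (\<lambda>_. bernoulli_pmf p)))"
  using assms by (simp add: set_Pi_pmf finite_PiE_dflt)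

lemma EI:
  assumes "finite A" "a \<in> A" "0 \<le> p" "p \<le> 1"
  shows "measure_pmf.expectation (Pi_pmf A d (\<lambda>_. bernoulli_pmf p)) (\<lambda>s. ind (s a)) = p"
  using E_sub[OF assms(1), of "{a}" "\<lambda>_. ind" d p] assms by (auto simp: ind_def)

lemma EII:
  assumes "finite A" "a \<in> A" "b \<in> A" "0 \<le> p" "p \<le> 1"
  shows "measure_pmf.expectation (Pi_pmf A d (\<lambda>_. bernoulli_pmf p)) (\<lambda>s. ind (s a) * ind (s b))
     = (if a = b then p else p^2)"
proof (cases "a = b")
  case True
  have "(\<lambda>s. ind (s a) * ind (s b)) = (\<lambda>s. ind (s a))" using True by (auto simp: ind_def fun_eq_iff)
  then show ?thesis using EI[OF assms(1,2,4,5), of d] True by simp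
next
  case False
  then show ?thesis
    using E_sub[OF assms(1), of "{a,b}" "\<lambda>_. ind" d p] assms by (auto simp: ind_def power2_eq_square)
qed


lemma alg: "(p::real) \<noteq> 0 \<Longrightarrow> (p\<^sup>2 * S\<^sup>2 + (p - p\<^sup>2) * Q) / p\<^sup>2 = S\<^sup>2 + (1 - p) / p * Q"
  by (simp add: field_simps power2_eq_square)

lemma key:
  fixes A :: "'a set" and W :: "'a \<Rightarrow> real"
  assumes fin: "finite A" and p: "0 < p" "p < 1" and W: "\<And>a. a \<in> A \<Longrightarrow> W a \<ge> 0"
  defines "X \<equiv> \<lambda>s. (\<Sum>a\<in>A. ind (s a) * W a) / p"
  shows "measure_pmf.expectation (Pi_pmf A d (\<lambda>_. bernoulli_pmf p)) X = sum W A
    \<and> measure_pmf.variance (Pi_pmf A d (\<lambda>_. bernoulli_pmf p)) X \<le> (1 - p) / p * (sum W A)\<^sup>2"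
proof -
  let ?M = "Pi_pmf A d (\<lambda>_. bernoulli_pmf p)"
  have int: "integrable (measure_pmf ?M) f" for f :: "_ \<Rightarrow> real"
    by (rule integrable_measure_pmf_finite) (rule fin_set[OF fin])
  have EX: "measure_pmf.expectation ?M X = sum W A"
  proof -
    have "measure_pmf.expectation ?M X = (\<Sum>a\<in>A. measure_pmf.expectation ?M (\<lambda>s. ind (s a)) * W a) / p"
      unfolding X_def by (simp add: Bochner_Integration.integral_sum int)
    also have "\<dots> = (\<Sum>a\<in>A. p * W a) / p"
      using EI[OF fin _, of _ p d] p by (intro arg_cong2[where f="(/)"] sum.cong) auto
    also have "\<dots> = sum W A" using p by (simp add: sum_distrib_left[symmetric])
    finally show ?thesis .
  qed
  have X2: "(X s)\<^sup>2 = (\<Sum>a\<in>A. \<Sum>b\<in>A. (ind (s a) * ind (s b)) * (W a * W b)) / p\<^sup>2" for s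
    unfolding X_def power2_eq_square by (simp add: sum_product algebra_simps)
  have EX2: "measure_pmf.expectation ?M (\<lambda>s. (X s)\<^sup>2)
      = (\<Sum>a\<in>A. \<Sum>b\<in>A. (if a = b then p else p\<^sup>2) * (W a * W b)) / p\<^sup>2"
    unfolding X2 using EII[OF fin _ _, of _ _ p d] p
    by (simp add: Bochner_Integration.integral_sum int)
  also have "\<dots> = (\<Sum>a\<in>A. \<Sum>b\<in>A. p\<^sup>2 * (W a * W b) + (if a = b then (p - p\<^sup>2) * (W a * W b) else 0)) / p\<^sup>2"
    by (intro arg_cong2[where f="(/)"] sum.cong refl) (auto simp: algebra_simps)
  also have "\<dots> = (p\<^sup>2 * (sum W A)\<^sup>2 + (p - p\<^sup>2) * (\<Sum>a\<in>A. (W a)\<^sup>2)) / p\<^sup>2"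
  proof -
    have "(\<Sum>a\<in>A. \<Sum>b\<in>A. p\<^sup>2 * (W a * W b) + (if a = b then (p - p\<^sup>2) * (W a * W b) else 0))
       = (\<Sum>a\<in>A. (\<Sum>b\<in>A. p\<^sup>2 * (W a * W b)) + (p - p\<^sup>2) * (W a)\<^sup>2)"
      by (intro sum.cong refl) (simp add: sum.distrib fin power2_eq_square)
    also have "\<dots> = p\<^sup>2 * (sum W A)\<^sup>2 + (p - p\<^sup>2) * (\<Sum>a\<in>A. (W a)\<^sup>2)"
      by (simp add: sum.distrib sum_distrib_left[symmetric] power2_eq_square sum_product)
    finally show ?thesis by simp
  qed
  also have "\<dots> = (sum W A)\<^sup>2 + (1 - p) / p * (\<Sum>a\<in>A. (W a)\<^sup>2)"
    using alg[of p "sum W A" "\<Sum>a\<in>A. (W a)\<^sup>2"] p by simp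
  finally have EX2': "measure_pmf.expectation ?M (\<lambda>s. (X s)\<^sup>2) = (sum W A)\<^sup>2 + (1 - p) / p * (\<Sum>a\<in>A. (W a)\<^sup>2)" .
  have V: "measure_pmf.variance ?M X = (1 - p) / p * (\<Sum>a\<in>A. (W a)\<^sup>2)"
    using measure_pmf.variance_eq[of ?M X, OF int int] EX EX2' by simp
  have "(\<Sum>a\<in>A. (W a)\<^sup>2) \<le> (sum W A)\<^sup>2"
  proof -
    have "(\<Sum>a\<in>A. (W a)\<^sup>2) = (\<Sum>a\<in>A. W a * W a)" by (simp add: power2_eq_square)
    also have "\<dots> \<le> (\<Sum>a\<in>A. W a * sum W A)"
      using W fin by (intro sum_mono mult_left_mono member_le_sum) auto
    also have "\<dots> = (sum W A)\<^sup>2" by (simp add: power2_eq_square sum_distrib_right)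
    finally show ?thesis .
  qed
  moreover have "0 \<le> (1 - p) / p" using p by simp
  ultimately have "(1 - p) / p * (\<Sum>a\<in>A. (W a)\<^sup>2) \<le> (1 - p) / p * (sum W A)\<^sup>2"
    by (rule mult_left_mono)
  then show ?thesis using EX V by simp
qed


lemma gen:
  fixes E :: "'e set" and A :: "'a set" and side :: "'e \<Rightarrow> 'a" and c :: "'e \<Rightarrow> real"
  assumes finE: "finite E" and fin: "finite A" and sd: "side ` E \<subseteq> A" and p: "0 < p" "p < 1"
    and c: "\<And>e. c e \<ge> 0"
  shows "measure_pmf.expectation (sample_set A p) (\<lambda>s. (\<Sum>e\<in>{e \<in> E. s (side e)}. c e) / p) = sum c E
    \<and> measure_pmf.variance (sample_set A p) (\<lambda>s. (\<Sum>e\<in>{e \<in> E. s (side e)}. c e) / p) \<le> (1 - p) / p * (sum c E)\<^sup>2"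
proof -
  define W where "W a = (\<Sum>e\<in>{e \<in> E. side e = a}. c e)" for a
  have SW: "sum W A = sum c E" unfolding W_def by (rule sum.group[OF finE fin sd])
  have eq: "(\<Sum>e\<in>{e \<in> E. s (side e)}. c e) / p = (\<Sum>a\<in>A. ind (s a) * W a) / p" for s
  proof -
    have "(\<Sum>a\<in>A. ind (s a) * W a) = (\<Sum>a\<in>A. \<Sum>e\<in>{e \<in> E. side e = a}. ind (s (side e)) * c e)"
      unfolding W_def sum_distrib_left by (intro sum.cong refl) auto
    also have "\<dots> = (\<Sum>e\<in>E. ind (s (side e)) * c e)" by (rule sum.group[OF finE fin sd])
    also have "\<dots> = (\<Sum>e\<in>{e \<in> E. s (side e)}. c e)"
      unfolding sum.inter_filter[OF finE] by (intro sum.cong) (auto simp: ind_def)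
    finally show "(\<Sum>e\<in>{e \<in> E. s (side e)}. c e) / p = (\<Sum>a\<in>A. ind (s a) * W a) / p" by simp
  qed
  have Wn: "W a \<ge> 0" for a unfolding W_def by (intro sum_nonneg c)
  have K: "measure_pmf.expectation (sample_set A p) (\<lambda>s. (\<Sum>a\<in>A. ind (s a) * W a) / p) = sum W A
    \<and> measure_pmf.variance (sample_set A p) (\<lambda>s. (\<Sum>a\<in>A. ind (s a) * W a) / p) \<le> (1 - p) / p * (sum W A)\<^sup>2"
    unfolding sample_set_def by (rule key[where W=W and d=False, OF fin p Wn])
  show ?thesis unfolding eq SW[symmetric] by (rule K)
qed

lemma count_sum:
  assumes finE: "finite E"
  shows "real (count_C eu el et E tau i) = (\<Sum>e\<in>E. real (count_Ce eu el et E tau i e))"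
proof -
  let ?S = "{q. is_inst eu el et E tau i q}"
  have sub: "?S \<subseteq> E \<times> E \<times> E \<times> E" by auto
  have finS: "finite ?S" by (rule finite_subset[OF sub]) (simp add: finE)
  have "real (card ?S) = (\<Sum>q\<in>?S. 1)" by simp
  also have "\<dots> = (\<Sum>e\<in>E. \<Sum>q\<in>{q \<in> ?S. fst q = e}. 1)"
    by (rule sum.group[symmetric, OF finS finE]) auto
  also have "\<dots> = (\<Sum>e\<in>E. real (count_Ce eu el et E tau i e))"
    unfolding count_Ce_def by (intro sum.cong refl) simp
  finally show ?thesis unfolding count_C_def .
qed

theorem theorem4p1:
  fixes E :: "'e set" and U :: "'u set" and L :: "'l set"
    and eu :: "'e \<Rightarrow> 'u" and el :: "'e \<Rightarrow> 'l" and et :: "'e \<Rightarrow> real"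
    and tau p :: real and i :: nat
  assumes finE: "finite E" and finU: "finite U" and finL: "finite L"
    and endU: "eu ` E \<subseteq> U" and endL: "el ` E \<subseteq> L"
    and tpos: "\<forall>e\<in>E. et e > 0"
    and tau: "tau > 0" and i: "i \<in> {1..6}" and p: "0 < p" "p < 1"
  defines "C \<equiv> real (count_C eu el et E tau i)"
  shows
    "measure_pmf.expectation (sample_set E p) (TBC_E eu el et E tau i p) = C
     \<and> measure_pmf.variance (sample_set E p) (TBC_E eu el et E tau i p) \<le> (1 - p) / p * C\<^sup>2
     \<and> measure_pmf.expectation (sample_set U p) (TBC_N eu el et E tau i p eu) = C
     \<and> measure_pmf.variance (sample_set U p) (TBC_N eu el et E tau i p eu) \<le> (1 - p) / p * C\<^sup>2
     \<and> measure_pmf.expectation (sample_set L p) (TBC_N eu el et E tau i p el) = C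
     \<and> measure_pmf.variance (sample_set L p) (TBC_N eu el et E tau i p el) \<le> (1 - p) / p * C\<^sup>2"
proof -
  let ?c = "\<lambda>e. real (count_Ce eu el et E tau i e)"
  have C: "C = sum ?c E" unfolding C_def by (rule count_sum[OF finE])
  have fE: "TBC_E eu el et E tau i p = (\<lambda>s. (\<Sum>e\<in>{e \<in> E. s ((\<lambda>x. x) e)}. ?c e) / p)"
    by (simp add: TBC_E_def estimator_def fun_eq_iff)
  have fN: "TBC_N eu el et E tau i p side = (\<lambda>s. (\<Sum>e\<in>{e \<in> E. s (side e)}. ?c e) / p)" for side :: "'e \<Rightarrow> 'v"
    by (simp add: TBC_N_def estimator_def fun_eq_iff)
  show ?thesis unfolding C fE fN
    using gen[OF finE finE _ p, of "\<lambda>x. x" ?c] gen[OF finE finU endU p, of ?c] gen[OF finE finL endL p, of ?c]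
    by auto
qed

end
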